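(* Let $G$ be a signed digraph that has an initial cycle. Then no Boolean network on $G$ is synchronizing.
   Context: A signed digraph on $V$ is $(V,E)$ with $E\subseteq V\times V\times\{-1,1\}$. A strong component is a maximal strongly connected induced subgraph; it is initial if no arc enters it from outside. An initial cycle is an initial strong component which is (isomorphic to) a cycle (a cycle has no repeated vertices; a loop is a cycle). A Boolean network (BN) is $f:\{0,1\}^V\to\{0,1\}^V$; its signed interaction digraph has a positive (negative) arc from $j$ to $i$ iff for some $x$ with $x_j=0$, $f_i(x+e_j)-f_i(x)$ is positive (negative). A BN on $G$ is one whose signed interaction digraph is $G$. $f^i(x)$ is $x$ with $x_i$ replaced by $f_i(x)$; $f^{i_1\cdots i_\ell}=f^{i_\ell}\circ\cdots\circ f^{i_1}$; $f$ is synchronizing if $f^w$ is constant for some word $w$. *)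

theory Defs
  imports Main
begin

text \<open>The vertex set V is the (finite) universe of the type 'v.
  A signed digraph on V is a set of arcs (j, i, s) with s \<in> {-1, 1}.\<close>

type_synonym 'v sdigraph = "('v \<times> 'v \<times> int) set"

definition signed_digraph :: "'v sdigraph \<Rightarrow> bool" where
  "signed_digraph E \<longleftrightarrow> (\<forall>(j, i, s) \<in> E. s \<in> {-1, 1})"

definition arcs_in :: "'v sdigraph \<Rightarrow> 'v set \<Rightarrow> ('v \<times> 'v) set" where
  "arcs_in E C = {(u, w). u \<in> C \<and> w \<in> C \<and> (\<exists>s. (u, w, s) \<in> E)}"

definition strongly_connected_on :: "'v sdigraph \<Rightarrow> 'v set \<Rightarrow> bool" where
  "strongly_connected_on E C \<longleftrightarrow> C \<noteq> {} \<and>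
     (\<forall>u \<in> C. \<forall>w \<in> C. (u, w) \<in> (arcs_in E C)\<^sup>*)"

definition strong_component :: "'v sdigraph \<Rightarrow> 'v set \<Rightarrow> bool" where
  "strong_component E C \<longleftrightarrow> strongly_connected_on E C \<and>
     (\<forall>D. C \<subseteq> D \<and> strongly_connected_on E D \<longrightarrow> D = C)"

definition initial_component :: "'v sdigraph \<Rightarrow> 'v set \<Rightarrow> bool" where
  "initial_component E C \<longleftrightarrow> strong_component E C \<and>
     (\<forall>u w s. (u, w, s) \<in> E \<and> w \<in> C \<longrightarrow> u \<in> C)"

text \<open>The signed subgraph induced by C is (isomorphic to) a cycle
  v_0 \<rightarrow> v_1 \<rightarrow> ... \<rightarrow> v_(n-1) \<rightarrow> v_0 (n \<ge> 1, distinct vertices; n = 1 is a loop),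
  each arc carrying exactly one sign and no other arcs inside C.\<close>
definition is_cycle_on :: "'v sdigraph \<Rightarrow> 'v set \<Rightarrow> bool" where
  "is_cycle_on E C \<longleftrightarrow> (\<exists>n vs. n \<ge> 1 \<and> inj_on vs {..<n} \<and> C = vs ` {..<n} \<and>
     (\<forall>u \<in> C. \<forall>w \<in> C. \<forall>s. (u, w, s) \<in> E \<longrightarrow>
        (\<exists>i<n. u = vs i \<and> w = vs (Suc i mod n))) \<and>
     (\<forall>i<n. \<exists>!s. (vs i, vs (Suc i mod n), s) \<in> E))"

definition has_initial_cycle :: "'v sdigraph \<Rightarrow> bool" where
  "has_initial_cycle E \<longleftrightarrow> (\<exists>C. initial_component E C \<and> is_cycle_on E C)"

text \<open>Boolean networks: f : {0,1}^V \<rightarrow> {0,1}^V, with configurations 'v \<Rightarrow> bool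
  (False = 0, True = 1).\<close>
definition interaction_graph :: "(('v \<Rightarrow> bool) \<Rightarrow> ('v \<Rightarrow> bool)) \<Rightarrow> 'v sdigraph" where
  "interaction_graph f =
     {(j, i, 1) | j i. \<exists>x. \<not> x j \<and> \<not> f x i \<and> f (x(j := True)) i} \<union>
     {(j, i, -1) | j i. \<exists>x. \<not> x j \<and> f x i \<and> \<not> f (x(j := True)) i}"

definition fupd :: "(('v \<Rightarrow> bool) \<Rightarrow> ('v \<Rightarrow> bool)) \<Rightarrow> 'v \<Rightarrow> ('v \<Rightarrow> bool) \<Rightarrow> ('v \<Rightarrow> bool)" where
  "fupd f i x = x(i := f x i)"

text \<open>f^{i_1...i_l} = f^{i_l} \<circ> ... \<circ> f^{i_1}: the first letter is applied first.\<close>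
definition fword :: "(('v \<Rightarrow> bool) \<Rightarrow> ('v \<Rightarrow> bool)) \<Rightarrow> 'v list \<Rightarrow> ('v \<Rightarrow> bool) \<Rightarrow> ('v \<Rightarrow> bool)" where
  "fword f w = fold (fupd f) w"

definition synchronizing :: "(('v \<Rightarrow> bool) \<Rightarrow> ('v \<Rightarrow> bool)) \<Rightarrow> bool" where
  "synchronizing f \<longleftrightarrow> (\<exists>w c. \<forall>x. fword f w x = c)"

end

theory Submission
  imports Defs
begin

lemma single_flip:
  assumes "\<forall>s. (j, w, s) \<notin> interaction_graph f"
  shows "f (x(j := b)) w = f (x(j := c)) w"
proof -
  have "f (x(j := False)) w = f (x(j := True)) w"
  proof (rule ccontr)
    assume ne: "f (x(j := False)) w \<noteq> f (x(j := True)) w"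
    define z where "z = x(j := False)"
    have zj: "\<not> z j" and zt: "z(j := True) = x(j := True)" by (auto simp: z_def)
    show False
    proof (cases "f z w")
      case True
      then have "\<exists>x. \<not> x j \<and> f x w \<and> \<not> f (x(j := True)) w"
        using zj zt ne z_def by metis
      then have "(j, w, -1) \<in> interaction_graph f"
        unfolding interaction_graph_def by blast
      then show False using assms by blast
    next
      case False
      then have "\<exists>x. \<not> x j \<and> \<not> f x w \<and> f (x(j := True)) w"
        using zj zt ne z_def by metis
      then have "(j, w, 1) \<in> interaction_graph f"
        unfolding interaction_graph_def by blast
      then show False using assms by blast
    qed
  qed
  then show ?thesis by (cases b; cases c) auto
qed

lemma indep_aux:
  assumes "\<forall>j. j \<noteq> u \<longrightarrow> (\<forall>s. (j, w, s) \<notin> interaction_graph f)"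
  shows "finite D \<Longrightarrow> u \<notin> D \<Longrightarrow> {j. x j \<noteq> y j} \<subseteq> D \<Longrightarrow> f x w = f y w"
proof (induction D arbitrary: x rule: finite_induct)
  case empty
  then have "x = y" by auto
  then show ?case by simp
next
  case (insert j D)
  have "f x w = f (x(j := x j)) w" by simp
  also have "\<dots> = f (x(j := y j)) w"
    using single_flip assms insert.prems by (metis insertI1)
  also have "\<dots> = f y w"
    using insert by (intro insert.IH) auto
  finally show ?case .
qed

lemma indep:
  fixes x y :: "'v::finite \<Rightarrow> bool"
  assumes "\<forall>j. j \<noteq> u \<longrightarrow> (\<forall>s. (j, w, s) \<notin> interaction_graph f)"
    and "x u = y u"
  shows "f x w = f y w"
  using indep_aux[OF assms(1), of "UNIV - {u}" x y] assms(2) by auto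

lemma arc_witness:
  assumes "(u, w, s) \<in> interaction_graph f"
  shows "\<exists>z. \<not> z u \<and> f z w \<noteq> f (z(u := True)) w"
proof -
  have "(\<exists>x. \<not> x u \<and> \<not> f x w \<and> f (x(u := True)) w) \<or>
        (\<exists>x. \<not> x u \<and> f x w \<and> \<not> f (x(u := True)) w)"
    using assms unfolding interaction_graph_def by simp blast
  then show ?thesis by blast
qed

lemma neg:
  fixes x y :: "'v::finite \<Rightarrow> bool"
  assumes nj: "\<forall>j. j \<noteq> u \<longrightarrow> (\<forall>s. (j, w, s) \<notin> interaction_graph f)"
    and arc: "(u, w, s) \<in> interaction_graph f"
    and yu: "y u = (\<not> x u)"
  shows "f y w = (\<not> f x w)"
proof -
  obtain z where zu: "\<not> z u" and ne: "f z w \<noteq> f (z(u := True)) w"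
    using arc_witness[OF arc] by blast
  have z0: "z(u := False) = z" using zu by (simp add: fun_eq_iff)
  have eqb: "f (z(u := b)) w = f (x(u := b)) w" for b
    by (rule indep[OF nj]) simp
  have ne2: "f (x(u := False)) w \<noteq> f (x(u := True)) w"
    using ne eqb[of False] eqb[of True] z0 by metis
  have e1: "f y w = f (x(u := y u)) w" by (rule indep[OF nj]) simp
  have e2: "f x w = f (x(u := x u)) w" by (rule indep[OF nj]) simp
  show ?thesis
  proof (cases "x u")
    case True
    then have "y u = False" using yu by simp
    then show ?thesis using e1 e2 ne2 True by (metis (full_types))
  next
    case False
    then have "y u = True" using yu by simp
    then show ?thesis using e1 e2 ne2 False by (metis (full_types))
  qed
qed

lemma suc_mod: assumes "i < n" shows "Suc i mod (n::nat) = (if Suc i = n then 0 else Suc i)"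
proof (cases "Suc i = n")
  case True
  then show ?thesis by simp
next
  case False
  then have "Suc i < n" using assms by simp
  then show ?thesis using False by simp
qed

theorem lemma2:
  fixes E :: "('v::finite) sdigraph"
  assumes "signed_digraph E"
    and "has_initial_cycle E"
  shows "\<not> (\<exists>f. interaction_graph f = E \<and> synchronizing f)"
proof
  assume "\<exists>f. interaction_graph f = E \<and> synchronizing f"
  then obtain f where fE: "interaction_graph f = E" and sync: "synchronizing f" by blast
  obtain C where ini: "initial_component E C" and cyc: "is_cycle_on E C"
    using assms(2) unfolding has_initial_cycle_def by blast
  obtain n vs where n1: "n \<ge> 1" and inj: "inj_on vs {..<n}" and Cdef: "C = vs ` {..<n}"
    and inside: "\<forall>u \<in> C. \<forall>w \<in> C. \<forall>s. (u, w, s) \<in> E \<longrightarrow>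
        (\<exists>i<n. u = vs i \<and> w = vs (Suc i mod n))"
    and arcs: "\<forall>i<n. \<exists>!s. (vs i, vs (Suc i mod n), s) \<in> E"
    using cyc unfolding is_cycle_on_def by blast
  have into: "\<And>u w s. (u, w, s) \<in> E \<Longrightarrow> w \<in> C \<Longrightarrow> u \<in> C"
    using ini unfolding initial_component_def by blast
  have modinj: "\<And>i k. i < n \<Longrightarrow> k < n \<Longrightarrow> Suc i mod n = Suc k mod n \<Longrightarrow> i = k"
    using suc_mod by (metis Zero_not_Suc nat.inject)
  have pred: "\<exists>u\<in>C. (\<forall>j. j \<noteq> u \<longrightarrow> (\<forall>s. (j, w, s) \<notin> interaction_graph f))
      \<and> (\<exists>s. (u, w, s) \<in> interaction_graph f)" if wC: "w \<in> C" for w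
  proof -
    obtain m where m: "m < n" "w = vs m" using wC Cdef by auto
    obtain i where i: "i < n" "Suc i mod n = m"
    proof (cases m)
      case 0
      then show ?thesis using that[of "n - 1"] n1 by auto
    next
      case (Suc k)
      then show ?thesis using that[of k] m by auto
    qed
    have sm: "Suc i mod n < n" using i by auto
    show ?thesis
    proof (intro bexI conjI allI impI)
      show "vs i \<in> C" using Cdef i by auto
      show "\<exists>s. (vs i, w, s) \<in> interaction_graph f"
        using arcs i m fE by metis
      fix j s assume jne: "j \<noteq> vs i"
      show "(j, w, s) \<notin> interaction_graph f"
      proof
        assume "(j, w, s) \<in> interaction_graph f"
        then have jw: "(j, w, s) \<in> E" using fE by simp
        then have "j \<in> C" using into wC by blast
        then obtain k where k: "k < n" "j = vs k" "w = vs (Suc k mod n)"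
          using inside wC jw by blast
        have "Suc k mod n < n" using k by auto
        then have "Suc k mod n = m" using inj m k unfolding inj_on_def by auto
        then have "k = i" using modinj i k by auto
        then show False using jne k by simp
      qed
    qed
  qed
  have step: "\<forall>v\<in>C. fupd f j y v = (\<not> fupd f j x v)"
    if "\<forall>v\<in>C. y v = (\<not> x v)" for j x y
  proof
    fix v assume vC: "v \<in> C"
    show "fupd f j y v = (\<not> fupd f j x v)"
    proof (cases "v = j")
      case True
      obtain u where "u \<in> C" "\<forall>j. j \<noteq> u \<longrightarrow> (\<forall>s. (j, v, s) \<notin> interaction_graph f)"
        "\<exists>s. (u, v, s) \<in> interaction_graph f" using pred vC by blast
      then have "f y v = (\<not> f x v)" using neg that by blast
      then show ?thesis using True by (simp add: fupd_def)
    next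
      case False
      then show ?thesis using that vC by (simp add: fupd_def)
    qed
  qed
  have word: "\<forall>v\<in>C. fold (fupd f) w y v = (\<not> fold (fupd f) w x v)"
    if "\<forall>v\<in>C. y v = (\<not> x v)" for w x y
    using that
  proof (induction w arbitrary: x y)
    case Nil
    then show ?case by simp
  next
    case (Cons a w)
    show ?case using Cons.IH[OF step[OF Cons.prems]] by simp
  qed
  obtain w c where wc: "\<forall>x. fword f w x = c" using sync unfolding synchronizing_def by blast
  define x :: "'v \<Rightarrow> bool" where "x = (\<lambda>_. False)"
  define y :: "'v \<Rightarrow> bool" where "y = (\<lambda>_. True)"
  have "\<forall>v\<in>C. fold (fupd f) w y v = (\<not> fold (fupd f) w x v)"
    by (rule word) (simp add: x_def y_def)
  moreover have "vs 0 \<in> C" using Cdef n1 by auto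
  ultimately show False using wc unfolding fword_def by metis
qed

end
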